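(* Let $\mu,\nu,d$ be integers ($d\ge1$) and $M$ an integer with $q^{\mu-1}\le M<q^\mu$. Let $\kappa_d$ be an integer with $1\le\kappa_d\le\frac23(\mu+\nu)$ and $q^{\kappa_d-1}<M^2/d^2\le q^{\kappa_d}$. Let $\rho_1$ be an integer with $0\le\rho_1\le\mu+\nu-\kappa_d$, let $\vartheta'\in\mathbb{R}$, and let $l\ge0$ be an integer. For $0\le u<q^{\kappa_d}$ and $0\le h<q^{\rho_1}$ put $$c_{\kappa_d,\rho_1,l}(u,h)=\frac{1}{q^{\rho_1}}\sum_{0\le w<q^{\rho_1}}f_P^{(\kappa_d+\rho_1)}\big(u+wq^{\kappa_d}+q^{\kappa_d+\rho_1}\lfloor q^l/q^{\rho_1}\rfloor\big)\,\overline{f_P^{(\kappa_d+\rho_1)}\big(wq^{\kappa_d}+q^{\kappa_d+\rho_1}\lfloor q^l/q^{\rho_1}\rfloor\big)}\,e\Big(-\frac{hw}{q^{\rho_1}}\Big),$$ and $$S(M,d,l)=\sum_{0\le h<q^{\rho_1}}\ \sum_{\frac{M}{qd}\le m'<\frac Md}\frac1{m'}\sum_{\substack{0\le k'<m'\\ \gcd(k',m')=1}}\Big|\sum_{0\le u<q^{\kappa_d}}c_{\kappa_d,\rho_1,l}(u,h)\,e\Big(-\frac{u\vartheta'}{q^{\mu+\nu}}+\frac{uk'}{m'}\Big)\Big|.$$ Then $|S(M,d,l)|\ll(\log q)\,q^{\rho_1/2+\kappa_d}$.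
   Context: Fix an integer $q\ge2$. For an integer $n\ge0$, $\varepsilon_i(n)$ is the $i$-th digit of $n$ in base $q$ ($\varepsilon_0$ the units digit). For real $x>0$, $T_q(x)=\lfloor\log x/\log q\rfloor$. $e(x)=\exp(2\pi i x)$. $P:\mathbb{N}\to\mathbb{N}$ is a nondecreasing integer-valued function. For integers $x,y\ge0$, $a_P(x,y)=\sum_{i\ge0}\varepsilon_{i+P(y)}(x)\cdots\varepsilon_i(x)$. Fix $\alpha\in\mathbb{R}$ and set $f_P(x,y)=e(\alpha a_P(x,y))$. For an integer $\rho\ge0$, $f_P^{(\rho)}(x,y)=f_P(x\bmod q^\rho,y)$ and, for an integer $n\ge1$, $f_P^{(\rho)}(n)=f_P^{(\rho)}(n,T_q(n))$. The implied constant depends at most on $q$. *)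

theory Defs
  imports Complex_Main
begin

definition digit :: "nat \<Rightarrow> nat \<Rightarrow> nat \<Rightarrow> nat" where
  "digit q i n = n div q ^ i mod q"

definition Tq :: "nat \<Rightarrow> real \<Rightarrow> int" where
  "Tq q x = \<lfloor>ln x / ln (real q)\<rfloor>"

definition e :: "real \<Rightarrow> complex" where
  "e x = exp (2 * of_real pi * \<i> * of_real x)"

text \<open>a_P(x,y) = sum over i of eps_{i+P(y)}(x) ... eps_i(x); digits of x vanish
  for i >= x, so the sum over i < x + 1 contains all nonzero terms.\<close>
definition aP :: "nat \<Rightarrow> (nat \<Rightarrow> nat) \<Rightarrow> nat \<Rightarrow> nat \<Rightarrow> nat" where
  "aP q P x y = (\<Sum>i<x+1. \<Prod>j\<le>P y. digit q (i + j) x)"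

definition fP :: "nat \<Rightarrow> real \<Rightarrow> (nat \<Rightarrow> nat) \<Rightarrow> nat \<Rightarrow> nat \<Rightarrow> complex" where
  "fP q \<alpha> P x y = e (\<alpha> * real (aP q P x y))"

definition fPr :: "nat \<Rightarrow> real \<Rightarrow> (nat \<Rightarrow> nat) \<Rightarrow> nat \<Rightarrow> nat \<Rightarrow> complex" where
  "fPr q \<alpha> P \<rho> n = fP q \<alpha> P (n mod q ^ \<rho>) (nat (Tq q (real n)))"

definition ccoef :: "nat \<Rightarrow> real \<Rightarrow> (nat \<Rightarrow> nat) \<Rightarrow> nat \<Rightarrow> nat \<Rightarrow> nat \<Rightarrow> nat \<Rightarrow> nat \<Rightarrow> complex" where
  "ccoef q \<alpha> P \<kappa> \<rho> l u h =
     (1 / of_nat (q ^ \<rho>)) *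
     (\<Sum>w<q ^ \<rho>.
        fPr q \<alpha> P (\<kappa> + \<rho>) (u + w * q ^ \<kappa> + q ^ (\<kappa> + \<rho>) * (q ^ l div q ^ \<rho>))
      * cnj (fPr q \<alpha> P (\<kappa> + \<rho>) (w * q ^ \<kappa> + q ^ (\<kappa> + \<rho>) * (q ^ l div q ^ \<rho>)))
      * e (- (real h * real w) / real (q ^ \<rho>)))"

end

theory Submission
  imports Defs "HOL-Analysis.Analysis"
begin


lemma e_add: "e (a + b) = e a * e b"
  by (simp add: e_def distrib_left distrib_right exp_add[symmetric] algebra_simps)

lemma norm_e [simp]: "norm (e x) = 1"
  unfolding e_def by (simp add: mult.commute mult.left_commute)

lemma cnj_e: "cnj (e x) = e (- x)"
  unfolding e_def by (simp add: exp_cnj)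

lemma e_int: "e (of_int n) = 1"
proof -
  have "exp (2 * of_real pi * \<i> * of_real (of_int n)) = exp (\<i> * (of_int n * (of_real pi * 2)))"
    by (simp add: algebra_simps)
  also have "\<dots> = 1" by (rule exp_2pi_1_int)
  finally show ?thesis unfolding e_def .
qed

lemma e_frac: "e x = e (frac x)"
proof -
  have "x = frac x + of_int \<lfloor>x\<rfloor>" by (simp add: frac_def)
  hence "e x = e (frac x) * e (of_int \<lfloor>x\<rfloor>)" by (metis e_add)
  thus ?thesis by (simp add: e_int)
qed

lemma e_minus_1: "norm (e x - 1) = 2 * \<bar>sin (pi * x)\<bar>"
proof -
  have "e x = exp (\<i> * of_real (2 * pi * x))" unfolding e_def by (simp add: algebra_simps)
  moreover have "norm (exp (\<i> * of_real (2 * pi * x)) - 1) = 2 * \<bar>sin (2 * pi * x / 2)\<bar>"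
    by (rule dist_exp_i_1)
  moreover have "2 * pi * x / 2 = pi * x" by simp
  ultimately show ?thesis by metis
qed

lemma sin_lower: assumes "0 \<le> x" "x \<le> pi/2" shows "x / pi \<le> sin x"
proof (cases "x \<le> pi/3")
  case True
  let ?f = "\<lambda>x. sin x - x/2"
  have d: "\<And>u. \<lbrakk>0 \<le> u; u \<le> x\<rbrakk> \<Longrightarrow> (?f has_real_derivative cos u - 1/2) (at u)"
    by (auto intro!: derivative_eq_intros)
  have c: "\<And>u. \<lbrakk>0 \<le> u; u \<le> x\<rbrakk> \<Longrightarrow> 0 \<le> cos u - 1/2"
  proof -
    fix u assume "0 \<le> u" "u \<le> x"
    hence "cos (pi/3) \<le> cos u" using True by (intro cos_monotone_0_pi_le) auto
    thus "0 \<le> cos u - 1/2" by (simp add: cos_60)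
  qed
  have "?f 0 \<le> ?f x"
    by (rule DERIV_nonneg_imp_nondecreasing[OF assms(1)]) (use d c in blast)
  hence "x/2 \<le> sin x" by simp
  moreover have "x/pi \<le> x/2" using assms pi_gt3 by (intro divide_left_mono) auto
  ultimately show ?thesis by linarith
next
  case False
  hence "sin (pi/3) \<le> sin x" using assms by (intro sin_monotone_2pi_le) auto
  moreover have "1 \<le> sqrt 3" by simp
  ultimately have "1/2 \<le> sin x" using sin_60 by linarith
  moreover have "x/pi \<le> 1/2" using assms pi_gt3 by (simp add: field_simps)
  ultimately show ?thesis by linarith
qed

lemma e_minus_1_lower: "2 * min (frac x) (1 - frac x) \<le> norm (e x - 1)"
proof -
  let ?y = "frac x"
  have y: "0 \<le> ?y" "?y < 1" by (auto simp: frac_lt_1)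
  have "norm (e x - 1) = 2 * \<bar>sin (pi * ?y)\<bar>" by (metis e_frac e_minus_1)
  moreover have "min ?y (1 - ?y) \<le> \<bar>sin (pi * ?y)\<bar>"
  proof (cases "?y \<le> 1/2")
    case True
    have "pi * ?y / pi \<le> sin (pi * ?y)" using y True by (intro sin_lower) auto
    thus ?thesis by simp
  next
    case False
    have "pi * (1 - ?y) / pi \<le> sin (pi * (1 - ?y))" using y False by (intro sin_lower) auto
    moreover have "sin (pi * (1 - ?y)) = sin (pi * ?y)"
      by (metis sin_pi_minus right_diff_distrib mult.right_neutral)
    ultimately show ?thesis by simp
  qed
  ultimately show ?thesis by (simp add: min_def split: if_splits)
qed

definition Dk :: "nat \<Rightarrow> real \<Rightarrow> complex" where
  "Dk L t = (\<Sum>a<L. e (real a * t))"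

lemma Dk_mult: "(e t - 1) * Dk L t = e (real L * t) - 1"
proof (induction L)
  case 0 thus ?case by (simp add: Dk_def e_def)
next
  case (Suc L)
  have "(e t - 1) * Dk (Suc L) t = (e t - 1) * Dk L t + (e t - 1) * e (real L * t)"
    by (simp add: Dk_def algebra_simps)
  also have "\<dots> = e (real L * t) - 1 + e t * e (real L * t) - e (real L * t)"
    using Suc by (simp add: algebra_simps)
  also have "e t * e (real L * t) = e (real (Suc L) * t)"
    by (simp add: e_add[symmetric] algebra_simps)
  finally show ?case by simp
qed

lemma Dk_norm_le: "norm (Dk L t) \<le> real L"
proof -
  have "norm (Dk L t) \<le> (\<Sum>a<L. norm (e (real a * t)))" unfolding Dk_def by (rule norm_sum)
  thus ?thesis by simp
qed

lemma Dk_bound: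
  assumes "0 < frac t"
  shows "(norm (Dk L t))\<^sup>2 \<le> 1 / (frac t)\<^sup>2 + 1 / (1 - frac t)\<^sup>2"
proof -
  let ?y = "frac t"
  let ?m = "min ?y (1 - ?y)"
  have y1: "?y < 1" by (rule frac_lt_1)
  have m: "0 < ?m" using assms y1 by simp
  have "norm (e t - 1) * norm (Dk L t) = norm (e (real L * t) - 1)"
    by (metis Dk_mult norm_mult)
  also have "\<dots> \<le> norm (e (real L * t)) + norm (1::complex)" by (rule norm_triangle_ineq4)
  finally have a: "norm (e t - 1) * norm (Dk L t) \<le> 2" by simp
  have "2 * ?m * norm (Dk L t) \<le> norm (e t - 1) * norm (Dk L t)"
    by (intro mult_right_mono e_minus_1_lower) auto
  with a have "?m * norm (Dk L t) \<le> 1" by simp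
  hence b: "norm (Dk L t) \<le> 1 / ?m" using m by (simp add: field_simps)
  hence "(norm (Dk L t))\<^sup>2 \<le> (1 / ?m)\<^sup>2" by (intro power_mono) auto
  also have "\<dots> \<le> 1 / ?y\<^sup>2 + 1 / (1 - ?y)\<^sup>2"
    by (cases "?y \<le> 1 - ?y") (auto simp: min_def power_divide)
  finally show ?thesis .
qed

lemma inv_sq_sum: "(\<Sum>k\<in>{1..K}. 1 / (real k)\<^sup>2) \<le> 2 - 1 / real (max K 1)"
proof (induction K)
  case 0 thus ?case by simp
next
  case (Suc K)
  show ?case
  proof (cases "K = 0")
    case True thus ?thesis by simp
  next
    case False
    have "(\<Sum>k\<in>{1..Suc K}. 1 / (real k)\<^sup>2) = (\<Sum>k\<in>{1..K}. 1 / (real k)\<^sup>2) + 1 / (real K + 1)\<^sup>2"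
      by simp
    also have "\<dots> \<le> 2 - 1 / real K + 1 / (real K + 1)\<^sup>2" using Suc False by simp
    also have "\<dots> \<le> 2 - 1 / (real K + 1)"
    proof -
      have K: "real K \<ge> 1" using False by simp
      have "1 / (real K + 1)\<^sup>2 \<le> 1 / (real K * (real K + 1))"
        using K by (intro divide_left_mono) (auto simp: power2_eq_square)
      also have "\<dots> = 1 / real K - 1 / (real K + 1)" using K by (simp add: field_simps)
      finally have "1 / (real K + 1)\<^sup>2 \<le> 1 / real K - 1 / (real K + 1)" .
      thus ?thesis by simp
    qed
    finally show ?thesis by (simp add: add.commute)
  qed
qed

lemma spacing_sum:
  fixes z :: "'a \<Rightarrow> real" and N :: nat
  assumes fin: "finite I" and N: "N \<ge> 1"
    and low: "\<And>i. i \<in> I \<Longrightarrow> 1 / real N \<le> z i"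
    and sp: "\<And>i j. i \<in> I \<Longrightarrow> j \<in> I \<Longrightarrow> i \<noteq> j \<Longrightarrow> 1 / real N \<le> \<bar>z i - z j\<bar>"
  shows "(\<Sum>i\<in>I. 1 / (z i)\<^sup>2) \<le> 2 * (real N)\<^sup>2"
proof -
  define g where "g i = nat \<lfloor>real N * z i\<rfloor>" for i
  have Npos: "real N > 0" using N by simp
  have g1: "g i \<ge> 1" and gle: "real (g i) \<le> real N * z i" if "i \<in> I" for i
  proof -
    have "1 \<le> real N * z i" using low[OF that] Npos by (simp add: field_simps)
    thus "g i \<ge> 1" unfolding g_def by linarith
    show "real (g i) \<le> real N * z i" unfolding g_def using \<open>1 \<le> real N * z i\<close>
      by linarith
  qed
  have inj: "inj_on g I"
  proof (rule inj_onI, rule ccontr)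
    fix i j assume ij: "i \<in> I" "j \<in> I" "g i = g j" "i \<noteq> j"
    have "1 / real N \<le> \<bar>z i - z j\<bar>" using sp ij by auto
    hence "real N * (1/real N) \<le> real N * \<bar>z i - z j\<bar>" by (rule mult_left_mono) simp
    hence "1 \<le> \<bar>real N * (z i - z j)\<bar>" using Npos by (simp add: abs_mult)
    hence d: "1 \<le> \<bar>real N * z i - real N * z j\<bar>" by (simp add: right_diff_distrib)
    have "0 \<le> 1 / real N" by simp
    hence "0 \<le> z i" "0 \<le> z j" using low ij by (meson order_trans)+
    hence p: "0 \<le> real N * z i" "0 \<le> real N * z j" by simp_all
    have fe: "\<lfloor>real N * z i\<rfloor> = \<lfloor>real N * z j\<rfloor>" using ij(3) p unfolding g_def
      by (metis eq_nat_nat_iff zero_le_floor)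
    have "real_of_int \<lfloor>real N * z i\<rfloor> \<le> real N * z i" "real N * z i < real_of_int \<lfloor>real N * z i\<rfloor> + 1"
      "real_of_int \<lfloor>real N * z j\<rfloor> \<le> real N * z j" "real N * z j < real_of_int \<lfloor>real N * z j\<rfloor> + 1"
      by (simp_all add: of_int_floor_le)
    thus False using d fe by linarith
  qed
  have "(\<Sum>i\<in>I. 1 / (z i)\<^sup>2) \<le> (\<Sum>i\<in>I. (real N)\<^sup>2 * (1 / (real (g i))\<^sup>2))"
  proof (rule sum_mono)
    fix i assume i: "i \<in> I"
    have gp: "0 < real (g i)" using g1[OF i] by simp
    have "real (g i) / real N \<le> z i" using gle[OF i] Npos by (simp add: field_simps)
    moreover have "0 < real (g i) / real N" using gp Npos by simp
    ultimately have zp: "0 < z i" by linarith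
    have "(real (g i) / real N)\<^sup>2 \<le> (z i)\<^sup>2" using gp Npos \<open>real (g i) / real N \<le> z i\<close> by (intro power_mono) auto
    hence "1 / (z i)\<^sup>2 \<le> 1 / (real (g i) / real N)\<^sup>2" using gp Npos zp
      by (intro divide_left_mono) auto
    thus "1 / (z i)\<^sup>2 \<le> (real N)\<^sup>2 * (1 / (real (g i))\<^sup>2)" by (simp add: power_divide)
  qed
  also have "\<dots> = (real N)\<^sup>2 * (\<Sum>k\<in>g ` I. 1 / (real k)\<^sup>2)"
    by (simp add: sum_distrib_left sum.reindex[OF inj])
  finally have A: "(\<Sum>i\<in>I. 1 / (z i)\<^sup>2) \<le> (real N)\<^sup>2 * (\<Sum>k\<in>g ` I. 1 / (real k)\<^sup>2)" .
  have "(\<Sum>k\<in>g ` I. 1 / (real k)\<^sup>2) \<le> (\<Sum>k\<in>{1..Max (g ` I)}. 1 / (real k)\<^sup>2)"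
  proof (cases "I = {}")
    case True thus ?thesis by (simp add: sum_nonneg)
  next
    case False
    show ?thesis
    proof (rule sum_mono2)
      show "g ` I \<subseteq> {1..Max (g ` I)}" using g1 fin by (auto intro: Max_ge)
    qed auto
  qed
  also have "\<dots> \<le> 2"
  proof -
    have "0 \<le> 1 / real (max (Max (g ` I)) 1)" by simp
    thus ?thesis using inv_sq_sum[of "Max (g ` I)"] by linarith
  qed
  finally have "(\<Sum>k\<in>g ` I. 1 / (real k)\<^sup>2) \<le> 2" .
  hence "(real N)\<^sup>2 * (\<Sum>k\<in>g ` I. 1 / (real k)\<^sup>2) \<le> (real N)\<^sup>2 * 2"
    by (rule mult_left_mono) simp
  with A show ?thesis by simp
qed

lemma frac_frac_diff: "frac (frac a - frac b) = frac (a - b)"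
  by (simp add: frac_diff[of a b])

lemma frac_spacing:
  assumes "1 / real N \<le> frac (frac a - frac b)" "frac (frac a - frac b) \<le> 1 - 1 / real N"
  shows "1 / real N \<le> \<bar>frac a - frac b\<bar>"
proof (cases "frac b \<le> frac a")
  case True
  have "frac a - frac b \<in> {0..<1}"
    using frac_lt_1[of a] frac_ge_0[of b] True by (simp only: atLeastLessThan_iff) linarith
  hence "frac (frac a - frac b) = frac a - frac b" by (rule frac_eq_id)
  thus ?thesis using assms True by simp
next
  case False
  have "frac (frac a - frac b) = frac (frac a - frac b + 1)" by (simp add: frac_1_eq)
  also have "\<dots> = frac a - frac b + 1"
  proof -
    have "frac a - frac b + 1 \<in> {0..<1}"
      using frac_lt_1[of b] frac_ge_0[of a] False by (simp only: atLeastLessThan_iff) linarith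
    thus ?thesis by (rule frac_eq_id)
  qed
  finally show ?thesis using assms False by simp
qed

lemma row_bound:
  fixes t :: "'a \<Rightarrow> real" and N :: nat
  assumes fin: "finite P" and N: "N \<ge> 1" and p0: "p0 \<in> P"
    and sp: "\<And>i j. i \<in> P \<Longrightarrow> j \<in> P \<Longrightarrow> i \<noteq> j \<Longrightarrow>
               1 / real N \<le> frac (t i - t j) \<and> frac (t i - t j) \<le> 1 - 1 / real N"
  shows "(\<Sum>p\<in>P. (norm (Dk (2*N) (t p - t p0)))\<^sup>2) \<le> 8 * (real N)\<^sup>2"
proof -
  define y where "y p = frac (t p - t p0)" for p
  let ?Q = "P - {p0}"
  have Npos: "0 < real N" using N by simp
  have ylow: "1 / real N \<le> y p" "1 / real N \<le> 1 - y p" if "p \<in> ?Q" for p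
    using sp[of p p0] that p0 unfolding y_def by auto
  have ysp: "1 / real N \<le> \<bar>y p - y p'\<bar>" if "p \<in> ?Q" "p' \<in> ?Q" "p \<noteq> p'" for p p'
  proof -
    have "frac (y p - y p') = frac (t p - t p')"
      unfolding y_def frac_frac_diff by (simp add: algebra_simps)
    thus ?thesis using sp[of p p'] that unfolding y_def
      by (intro frac_spacing) auto
  qed
  have s1: "(\<Sum>p\<in>?Q. 1 / (y p)\<^sup>2) \<le> 2 * (real N)\<^sup>2"
    by (rule spacing_sum) (use fin N ylow ysp in auto)
  have s2: "(\<Sum>p\<in>?Q. 1 / (1 - y p)\<^sup>2) \<le> 2 * (real N)\<^sup>2"
  proof (rule spacing_sum)
    show "1 / real N \<le> \<bar>(1 - y i) - (1 - y j)\<bar>" if "i \<in> ?Q" "j \<in> ?Q" "i \<noteq> j" for i j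
      using ysp[OF that] by (simp add: abs_minus_commute)
  qed (use fin N ylow in auto)
  have "(\<Sum>p\<in>?Q. (norm (Dk (2*N) (t p - t p0)))\<^sup>2) \<le> (\<Sum>p\<in>?Q. 1 / (y p)\<^sup>2 + 1 / (1 - y p)\<^sup>2)"
  proof (rule sum_mono)
    fix p assume p: "p \<in> ?Q"
    have "0 < y p" using ylow[OF p] Npos by (smt (verit) divide_pos_pos)
    thus "(norm (Dk (2*N) (t p - t p0)))\<^sup>2 \<le> 1 / (y p)\<^sup>2 + 1 / (1 - y p)\<^sup>2"
      unfolding y_def by (rule Dk_bound)
  qed
  also have "\<dots> \<le> 4 * (real N)\<^sup>2" using s1 s2 by (simp add: sum.distrib)
  finally have r: "(\<Sum>p\<in>?Q. (norm (Dk (2*N) (t p - t p0)))\<^sup>2) \<le> 4 * (real N)\<^sup>2" .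
  have "(norm (Dk (2*N) (t p0 - t p0)))\<^sup>2 \<le> (real (2*N))\<^sup>2"
    by (intro power_mono Dk_norm_le) auto
  hence z: "(norm (Dk (2*N) (t p0 - t p0)))\<^sup>2 \<le> 4 * (real N)\<^sup>2" by (simp add: power_mult_distrib)
  have "(\<Sum>p\<in>P. (norm (Dk (2*N) (t p - t p0)))\<^sup>2) =
        (norm (Dk (2*N) (t p0 - t p0)))\<^sup>2 + (\<Sum>p\<in>?Q. (norm (Dk (2*N) (t p - t p0)))\<^sup>2)"
    using fin p0 by (simp add: sum.remove)
  thus ?thesis using r z by linarith
qed

lemma e_cnj_mult: "e u * cnj (e v) = e (u - v)"
  by (simp add: cnj_e e_add[symmetric])

lemma W_sq:
  fixes y :: "'a \<Rightarrow> complex" and x :: "'a \<Rightarrow> real"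
  shows "complex_of_real (\<Sum>a<L. \<Sum>b<L. (norm (\<Sum>p\<in>P. y p * e ((real a - real b) * x p)))\<^sup>2)
       = (\<Sum>p\<in>P. \<Sum>p'\<in>P. y p * cnj (y p') * complex_of_real ((norm (Dk L (x p - x p')))\<^sup>2))"
proof -
  have E: "e ((real a - real b) * x p) * cnj (e ((real a - real b) * x p'))
         = e (real a * (x p - x p')) * cnj (e (real b * (x p - x p')))" for a b p p'
  proof -
    have "(real a - real b) * x p - (real a - real b) * x p' = real a * (x p - x p') - real b * (x p - x p')"
      by (simp add: algebra_simps)
    thus ?thesis by (simp only: e_cnj_mult)
  qed
  have "complex_of_real (\<Sum>a<L. \<Sum>b<L. (norm (\<Sum>p\<in>P. y p * e ((real a - real b) * x p)))\<^sup>2)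
      = (\<Sum>a<L. \<Sum>b<L. (\<Sum>p\<in>P. y p * e ((real a - real b) * x p)) * cnj (\<Sum>p'\<in>P. y p' * e ((real a - real b) * x p')))"
    by (simp only: of_real_sum complex_norm_square)
  also have "\<dots> = (\<Sum>a<L. \<Sum>b<L. \<Sum>p\<in>P. \<Sum>p'\<in>P. y p * cnj (y p') * (e (real a * (x p - x p')) * cnj (e (real b * (x p - x p')))))"
  proof (intro sum.cong refl)
    fix a b
    have "(\<Sum>p\<in>P. y p * e ((real a - real b) * x p)) * cnj (\<Sum>p'\<in>P. y p' * e ((real a - real b) * x p'))
       = (\<Sum>p\<in>P. \<Sum>p'\<in>P. (y p * e ((real a - real b) * x p)) * cnj (y p' * e ((real a - real b) * x p')))"
      by (simp only: cnj_sum sum_product)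
    also have "\<dots> = (\<Sum>p\<in>P. \<Sum>p'\<in>P. y p * cnj (y p') * (e ((real a - real b) * x p) * cnj (e ((real a - real b) * x p'))))"
      by (intro sum.cong refl) (simp only: complex_cnj_mult mult_ac)
    also have "\<dots> = (\<Sum>p\<in>P. \<Sum>p'\<in>P. y p * cnj (y p') * (e (real a * (x p - x p')) * cnj (e (real b * (x p - x p')))))"
      by (simp only: E)
    finally show "(\<Sum>p\<in>P. y p * e ((real a - real b) * x p)) * cnj (\<Sum>p'\<in>P. y p' * e ((real a - real b) * x p'))
       = (\<Sum>p\<in>P. \<Sum>p'\<in>P. y p * cnj (y p') * (e (real a * (x p - x p')) * cnj (e (real b * (x p - x p')))))" .
  qed
  also have "\<dots> = (\<Sum>p\<in>P. \<Sum>p'\<in>P. \<Sum>a<L. \<Sum>b<L. y p * cnj (y p') * (e (real a * (x p - x p')) * cnj (e (real b * (x p - x p')))))"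
  proof -
    have "(\<Sum>a<L. \<Sum>b<L. \<Sum>p\<in>P. \<Sum>p'\<in>P. F a b p p') = (\<Sum>p\<in>P. \<Sum>p'\<in>P. \<Sum>a<L. \<Sum>b<L. F a b p p')"
      for F :: "nat \<Rightarrow> nat \<Rightarrow> 'a \<Rightarrow> 'a \<Rightarrow> complex"
    proof -
      have sw: "(\<Sum>b\<in>B. \<Sum>p\<in>P. \<Sum>p'\<in>P. G b p p') = (\<Sum>p\<in>P. \<Sum>p'\<in>P. \<Sum>b\<in>B. G b p p')"
        for G :: "nat \<Rightarrow> 'a \<Rightarrow> 'a \<Rightarrow> complex" and B :: "nat set"
      proof -
        have "(\<Sum>b\<in>B. \<Sum>p\<in>P. \<Sum>p'\<in>P. G b p p') = (\<Sum>p\<in>P. \<Sum>b\<in>B. \<Sum>p'\<in>P. G b p p')"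
          by (rule sum.swap)
        also have "\<dots> = (\<Sum>p\<in>P. \<Sum>p'\<in>P. \<Sum>b\<in>B. G b p p')"
          by (intro sum.cong refl sum.swap)
        finally show ?thesis .
      qed
      have "(\<Sum>a<L. \<Sum>b<L. \<Sum>p\<in>P. \<Sum>p'\<in>P. F a b p p') = (\<Sum>a<L. \<Sum>p\<in>P. \<Sum>p'\<in>P. \<Sum>b<L. F a b p p')"
        by (intro sum.cong refl sw)
      also have "\<dots> = (\<Sum>p\<in>P. \<Sum>p'\<in>P. \<Sum>a<L. \<Sum>b<L. F a b p p')"
        by (rule sw)
      finally show ?thesis .
    qed
    thus ?thesis .
  qed
  also have "\<dots> = (\<Sum>p\<in>P. \<Sum>p'\<in>P. y p * cnj (y p') * complex_of_real ((norm (Dk L (x p - x p')))\<^sup>2))"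
  proof (intro sum.cong refl)
    fix p p'
    have "(\<Sum>a<L. \<Sum>b<L. y p * cnj (y p') * (e (real a * (x p - x p')) * cnj (e (real b * (x p - x p')))))
        = y p * cnj (y p') * (Dk L (x p - x p') * cnj (Dk L (x p - x p')))"
      unfolding Dk_def by (simp only: sum_distrib_left[symmetric] cnj_sum sum_product)
    thus "(\<Sum>a<L. \<Sum>b<L. y p * cnj (y p') * (e (real a * (x p - x p')) * cnj (e (real b * (x p - x p')))))
        = y p * cnj (y p') * complex_of_real ((norm (Dk L (x p - x p')))\<^sup>2)"
      by (simp only: complex_norm_square)
  qed
  finally show ?thesis .
qed

lemma large_sieve:
  fixes x :: "'a \<Rightarrow> real" and c :: "nat \<Rightarrow> complex" and N :: nat
  assumes fin: "finite P" and N: "N \<ge> 1"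
    and sp: "\<And>i j. i \<in> P \<Longrightarrow> j \<in> P \<Longrightarrow> i \<noteq> j \<Longrightarrow>
               1 / real N \<le> frac (x i - x j) \<and> frac (x i - x j) \<le> 1 - 1 / real N"
  shows "(\<Sum>p\<in>P. (norm (\<Sum>u<N. c u * e (real u * x p)))\<^sup>2) \<le> 8 * real N * (\<Sum>u<N. (norm (c u))\<^sup>2)"
proof -
  define S where "S p = (\<Sum>u<N. c u * e (real u * x p))" for p
  define y where "y p = cnj (S p)" for p
  define A where "A = (\<Sum>p\<in>P. (norm (S p))\<^sup>2)"
  define W where "W a b = (\<Sum>p\<in>P. y p * e ((real a - real b) * x p))" for a b :: nat
  define CC where "CC = (\<Sum>u<N. (norm (c u))\<^sup>2)"
  define TT where "TT = (\<Sum>u<N. (norm (W u 0))\<^sup>2)"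
  define K where "K p p' = (norm (Dk (2*N) (x p - x p')))\<^sup>2" for p p'
  have Npos: "0 < real N" using N by simp
  have A0: "0 \<le> A" unfolding A_def by (simp add: sum_nonneg)
  have normy: "norm (y p) = norm (S p)" for p unfolding y_def by simp
  have "complex_of_real A = (\<Sum>p\<in>P. y p * S p)"
    unfolding A_def y_def by (simp only: of_real_sum complex_norm_square mult.commute)
  also have "\<dots> = (\<Sum>u<N. c u * W u 0)"
  proof -
    have "(\<Sum>p\<in>P. y p * S p) = (\<Sum>p\<in>P. \<Sum>u<N. c u * (y p * e (real u * x p)))"
      unfolding S_def by (simp add: sum_distrib_left mult_ac)
    also have "\<dots> = (\<Sum>u<N. \<Sum>p\<in>P. c u * (y p * e (real u * x p)))" by (rule sum.swap)
    also have "\<dots> = (\<Sum>u<N. c u * W u 0)" unfolding W_def by (simp add: sum_distrib_left)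
    finally show ?thesis .
  qed
  finally have a: "complex_of_real A = (\<Sum>u<N. c u * W u 0)" .
  have "A = norm (complex_of_real A)" using A0 by simp
  also have "\<dots> \<le> (\<Sum>u<N. norm (c u) * norm (W u 0))" unfolding a
    by (rule order_trans[OF norm_sum]) (simp add: norm_mult)
  finally have b: "A \<le> (\<Sum>u<N. norm (c u) * norm (W u 0))" .
  have "(\<Sum>u<N. norm (c u) * norm (W u 0))\<^sup>2 \<le> CC * TT"
    unfolding CC_def TT_def by (rule Cauchy_Schwarz_ineq_sum)
  moreover have "A\<^sup>2 \<le> (\<Sum>u<N. norm (c u) * norm (W u 0))\<^sup>2"
    using b A0 by (intro power_mono) auto
  ultimately have AC: "A\<^sup>2 \<le> CC * TT" by linarith
  have "real N * TT = (\<Sum>b<N. \<Sum>u<N. (norm (W (b + u) b))\<^sup>2)"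
  proof -
    have "W (b + u) b = W u 0" for b u unfolding W_def by simp
    thus ?thesis unfolding TT_def by simp
  qed
  also have "\<dots> \<le> (\<Sum>a<2*N. \<Sum>b<2*N. (norm (W a b))\<^sup>2)"
  proof -
    define f where "f = (\<lambda>(a, b). (norm (W a b))\<^sup>2)"
    define h where "h = (\<lambda>(b, u). (b + u, b :: nat))"
    have inj: "inj_on h ({..<N} \<times> {..<N})" unfolding h_def by (auto simp: inj_on_def)
    have "(\<Sum>b<N. \<Sum>u<N. (norm (W (b + u) b))\<^sup>2) = (\<Sum>q\<in>{..<N} \<times> {..<N}. f (h q))"
      unfolding f_def h_def by (simp add: sum.cartesian_product split_def)
    also have "\<dots> = (\<Sum>q\<in>h ` ({..<N} \<times> {..<N}). f q)" by (simp add: sum.reindex[OF inj])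
    also have "\<dots> \<le> (\<Sum>q\<in>{..<2*N} \<times> {..<2*N}. f q)"
      by (rule sum_mono2) (auto simp: h_def f_def)
    also have "\<dots> = (\<Sum>a<2*N. \<Sum>b<2*N. (norm (W a b))\<^sup>2)"
      unfolding f_def by (simp add: sum.cartesian_product)
    finally show ?thesis .
  qed
  also have "\<dots> \<le> (\<Sum>p\<in>P. \<Sum>p'\<in>P. norm (y p) * norm (y p') * K p p')"
  proof -
    have nn: "0 \<le> (\<Sum>a<2*N. \<Sum>b<2*N. (norm (W a b))\<^sup>2)" by (intro sum_nonneg) auto
    have "(\<Sum>a<2*N. \<Sum>b<2*N. (norm (W a b))\<^sup>2) = norm (complex_of_real (\<Sum>a<2*N. \<Sum>b<2*N. (norm (W a b))\<^sup>2))"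
      by (simp only: norm_of_real abs_of_nonneg[OF nn])
    also have "\<dots> = norm (\<Sum>p\<in>P. \<Sum>p'\<in>P. y p * cnj (y p') * complex_of_real (K p p'))"
      unfolding W_def K_def by (simp only: W_sq)
    also have "\<dots> \<le> (\<Sum>p\<in>P. norm (\<Sum>p'\<in>P. y p * cnj (y p') * complex_of_real (K p p')))"
      by (rule norm_sum)
    also have "\<dots> \<le> (\<Sum>p\<in>P. \<Sum>p'\<in>P. norm (y p * cnj (y p') * complex_of_real (K p p')))"
      by (intro sum_mono norm_sum)
    also have "\<dots> = (\<Sum>p\<in>P. \<Sum>p'\<in>P. norm (y p) * norm (y p') * K p p')"
    proof -
      have kk: "norm (complex_of_real (K p p')) = K p p'" for p p'
        unfolding K_def by (simp only: norm_of_real abs_power2 abs_norm_cancel)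
      show ?thesis by (simp only: norm_mult kk complex_mod_cnj)
    qed
    finally show ?thesis .
  qed
  also have "\<dots> \<le> (\<Sum>p\<in>P. \<Sum>p'\<in>P. ((norm (y p))\<^sup>2 * K p p' + (norm (y p'))\<^sup>2 * K p p') / 2)"
  proof (intro sum_mono)
    fix p p'
    have K0: "0 \<le> K p p'" unfolding K_def by simp
    have "2 * (norm (y p) * norm (y p')) \<le> (norm (y p))\<^sup>2 + (norm (y p'))\<^sup>2"
    proof -
      have "0 \<le> (norm (y p) - norm (y p'))\<^sup>2" by simp
      thus ?thesis by (simp only: power2_diff)
    qed
    hence "2 * (norm (y p) * norm (y p')) * K p p' \<le> ((norm (y p))\<^sup>2 + (norm (y p'))\<^sup>2) * K p p'"
      using K0 by (rule mult_right_mono)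
    thus "norm (y p) * norm (y p') * K p p' \<le> ((norm (y p))\<^sup>2 * K p p' + (norm (y p'))\<^sup>2 * K p p') / 2"
      by (simp add: algebra_simps)
  qed
  also have "\<dots> = (\<Sum>p\<in>P. (norm (y p))\<^sup>2 * (\<Sum>p'\<in>P. K p p')) / 2 + (\<Sum>p'\<in>P. (norm (y p'))\<^sup>2 * (\<Sum>p\<in>P. K p p')) / 2"
  proof -
    have e1: "(\<Sum>p\<in>P. \<Sum>p'\<in>P. ((norm (y p))\<^sup>2 * K p p' + (norm (y p'))\<^sup>2 * K p p') / 2)
       = (\<Sum>p\<in>P. \<Sum>p'\<in>P. (norm (y p))\<^sup>2 * K p p') / 2 + (\<Sum>p\<in>P. \<Sum>p'\<in>P. (norm (y p'))\<^sup>2 * K p p') / 2"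
      by (simp only: sum.distrib sum_divide_distrib add_divide_distrib)
    have e2: "(\<Sum>p\<in>P. \<Sum>p'\<in>P. (norm (y p))\<^sup>2 * K p p') = (\<Sum>p\<in>P. (norm (y p))\<^sup>2 * (\<Sum>p'\<in>P. K p p'))"
      by (simp only: sum_distrib_left)
    have "(\<Sum>p\<in>P. \<Sum>p'\<in>P. (norm (y p'))\<^sup>2 * K p p') = (\<Sum>p'\<in>P. \<Sum>p\<in>P. (norm (y p'))\<^sup>2 * K p p')"
      by (rule sum.swap)
    also have "\<dots> = (\<Sum>p'\<in>P. (norm (y p'))\<^sup>2 * (\<Sum>p\<in>P. K p p'))"
      by (simp only: sum_distrib_left)
    finally have e3: "(\<Sum>p\<in>P. \<Sum>p'\<in>P. (norm (y p'))\<^sup>2 * K p p') = (\<Sum>p'\<in>P. (norm (y p'))\<^sup>2 * (\<Sum>p\<in>P. K p p'))" .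
    show ?thesis by (simp only: e1 e2 e3)
  qed
  also have "\<dots> \<le> (\<Sum>p\<in>P. (norm (y p))\<^sup>2 * (8 * (real N)\<^sup>2)) / 2 + (\<Sum>p'\<in>P. (norm (y p'))\<^sup>2 * (8 * (real N)\<^sup>2)) / 2"
  proof -
    have r1: "(\<Sum>p'\<in>P. K p p') \<le> 8 * (real N)\<^sup>2" if "p \<in> P" for p
    proof -
      have "(\<Sum>p'\<in>P. (norm (Dk (2*N) ((- x) p' - (- x) p)))\<^sup>2) \<le> 8 * (real N)\<^sup>2"
        by (rule row_bound[OF fin N that]) (use sp in \<open>auto simp: algebra_simps\<close>)
      thus ?thesis unfolding K_def by (simp add: algebra_simps)
    qed
    have r2: "(\<Sum>p\<in>P. K p p') \<le> 8 * (real N)\<^sup>2" if "p' \<in> P" for p'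
      unfolding K_def by (rule row_bound[OF fin N that sp])
    have "(\<Sum>p\<in>P. (norm (y p))\<^sup>2 * (\<Sum>p'\<in>P. K p p')) \<le> (\<Sum>p\<in>P. (norm (y p))\<^sup>2 * (8 * (real N)\<^sup>2))"
      by (intro sum_mono mult_left_mono r1) auto
    moreover have "(\<Sum>p'\<in>P. (norm (y p'))\<^sup>2 * (\<Sum>p\<in>P. K p p')) \<le> (\<Sum>p'\<in>P. (norm (y p'))\<^sup>2 * (8 * (real N)\<^sup>2))"
      by (intro sum_mono mult_left_mono r2) auto
    ultimately show ?thesis by linarith
  qed
  also have "\<dots> = 8 * (real N)\<^sup>2 * A"
    unfolding A_def normy by (simp add: sum_distrib_left sum_distrib_right mult_ac)
  finally have "real N * TT \<le> 8 * (real N)\<^sup>2 * A" .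
  hence TT: "TT \<le> 8 * real N * A" using Npos by (simp add: power2_eq_square mult_ac)
  have CC0: "0 \<le> CC" unfolding CC_def by (simp add: sum_nonneg)
  have "A\<^sup>2 \<le> CC * (8 * real N * A)" using AC TT CC0 by (meson mult_left_mono order_trans)
  hence "A * A \<le> A * (8 * real N * CC)" by (simp add: power2_eq_square mult_ac)
  hence "A \<le> 8 * real N * CC" using A0
    by (cases "A = 0") (auto simp: CC_def sum_nonneg)
  thus ?thesis unfolding A_def CC_def S_def .
qed

lemma frac_int_div:
  fixes n D :: int and N :: nat
  assumes D: "0 < D" "D \<le> int N" and nd: "\<not> D dvd n"
  shows "1 / real N \<le> frac (real_of_int n / real_of_int D) \<and> frac (real_of_int n / real_of_int D) \<le> 1 - 1 / real N"
proof -
  define r where "r = n mod D"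
  have r0: "0 \<le> r" "r < D" unfolding r_def using D by auto
  have rn0: "r \<noteq> 0" unfolding r_def using nd by (simp add: dvd_eq_mod_eq_0)
  hence r1: "1 \<le> r" "r \<le> D - 1" using r0 by auto
  have "real_of_int n / real_of_int D = real_of_int (n div D) + real_of_int r / real_of_int D"
  proof -
    have "n = D * (n div D) + r" unfolding r_def by simp
    hence "real_of_int n = real_of_int D * real_of_int (n div D) + real_of_int r"
      by (metis of_int_add of_int_mult)
    thus ?thesis using D by (simp add: field_simps)
  qed
  hence "frac (real_of_int n / real_of_int D) = frac (real_of_int r / real_of_int D)"
    by (simp add: add.commute)
  also have "\<dots> = real_of_int r / real_of_int D"
    using r0 D by (intro frac_eq_id) auto
  finally have f: "frac (real_of_int n / real_of_int D) = real_of_int r / real_of_int D" .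
  have Dp: "0 < real_of_int D" using D by simp
  have DN: "real_of_int D \<le> real N" using D by linarith
  have "1 / real N \<le> 1 / real_of_int D" using Dp DN by (intro divide_left_mono) auto
  also have "\<dots> \<le> real_of_int r / real_of_int D" using r1 Dp by (intro divide_right_mono) auto
  finally have l: "1 / real N \<le> real_of_int r / real_of_int D" .
  have "real_of_int r / real_of_int D \<le> (real_of_int D - 1) / real_of_int D"
    using r1 Dp by (intro divide_right_mono) auto
  also have "\<dots> = 1 - 1 / real_of_int D" using Dp by (simp add: field_simps)
  also have "\<dots> \<le> 1 - 1 / real N" using \<open>1 / real N \<le> 1 / real_of_int D\<close> by simp
  finally show ?thesis using f l by simp
qed

lemma farey_spacing:
  fixes m1 m2 k1 k2 :: int and N :: nat and \<beta> :: real
  assumes m: "0 < m1" "0 < m2" "m1 * m2 \<le> int N"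
    and k: "0 \<le> k1" "k1 < m1" "0 \<le> k2" "k2 < m2" "gcd k1 m1 = 1" "gcd k2 m2 = 1"
    and ne: "(m1, k1) \<noteq> (m2, k2)"
  shows "1 / real N \<le> frac ((\<beta> + real_of_int k1 / real_of_int m1) - (\<beta> + real_of_int k2 / real_of_int m2))
       \<and> frac ((\<beta> + real_of_int k1 / real_of_int m1) - (\<beta> + real_of_int k2 / real_of_int m2)) \<le> 1 - 1 / real N"
proof -
  have eq: "(\<beta> + real_of_int k1 / real_of_int m1) - (\<beta> + real_of_int k2 / real_of_int m2)
      = real_of_int (k1 * m2 - k2 * m1) / real_of_int (m1 * m2)"
    using m by (simp add: field_simps)
  have nd: "\<not> (m1 * m2) dvd (k1 * m2 - k2 * m1)"
  proof
    assume dv: "(m1 * m2) dvd (k1 * m2 - k2 * m1)"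
    have "m1 dvd k1 * m2 - k2 * m1" using dv by (rule dvd_mult_left)
    hence "m1 dvd k1 * m2" by (metis dvd_diff_commute dvd_triv_right dvd_add_right_iff diff_add_cancel)
    moreover have "coprime m1 k1" using k(5) by (simp add: coprime_iff_gcd_eq_1 gcd.commute)
    ultimately have d1: "m1 dvd m2" by (simp add: coprime_dvd_mult_right_iff)
    have "m2 dvd k1 * m2 - k2 * m1" using dv by (rule dvd_mult_right)
    hence "m2 dvd k1 * m2 - (k1 * m2 - k2 * m1)" by (rule dvd_diff[OF dvd_triv_right])
    hence "m2 dvd k2 * m1" by (simp add: algebra_simps)
    moreover have "coprime m2 k2" using k(6) by (simp add: coprime_iff_gcd_eq_1 gcd.commute)
    ultimately have d2: "m2 dvd m1" by (simp add: coprime_dvd_mult_right_iff)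
    have mm: "m1 = m2" using d1 d2 m by (simp add: zdvd_antisym_nonneg)
    hence "m1 * m1 dvd m1 * (k1 - k2)" using dv by (simp add: algebra_simps)
    hence dk: "m1 dvd k1 - k2" using m by simp
    have lt: "\<bar>k1 - k2\<bar> < m1" using k mm by auto
    have "k1 - k2 = 0"
    proof (rule ccontr)
      assume "k1 - k2 \<noteq> 0"
      hence "\<bar>m1\<bar> \<le> \<bar>k1 - k2\<bar>" using dk by (rule dvd_imp_le_int)
      thus False using lt by linarith
    qed
    thus False using ne mm by simp
  qed
  have "0 < m1 * m2" using m by simp
  show ?thesis unfolding eq by (rule frac_int_div[OF \<open>0 < m1 * m2\<close> m(3) nd])
qed

lemma norm_fPr [simp]: "norm (fPr q \<alpha> P \<rho> n) = 1"
  by (simp add: fPr_def fP_def)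

lemma ccoef_sq:
  assumes q: "q \<ge> 2"
  shows "(\<Sum>h<q^\<rho>. (norm (ccoef q \<alpha> P \<kappa> \<rho> l u h))\<^sup>2) \<le> 8"
proof -
  define R where "R = q ^ \<rho>"
  have R1: "R \<ge> 1" unfolding R_def using q by simp
  have Rp: "0 < real R" using R1 by simp
  define a where "a w = fPr q \<alpha> P (\<kappa>+\<rho>) (u + w*q^\<kappa> + q^(\<kappa>+\<rho>)*(q^l div q^\<rho>))
      * cnj (fPr q \<alpha> P (\<kappa>+\<rho>) (w*q^\<kappa> + q^(\<kappa>+\<rho>)*(q^l div q^\<rho>)))" for w
  have na: "norm (a w) = 1" for w unfolding a_def by (simp add: norm_mult)
  define x where "x h = - real h / real R" for h :: nat
  have cc: "ccoef q \<alpha> P \<kappa> \<rho> l u h = (1 / of_nat R) * (\<Sum>w<R. a w * e (real w * x h))" for h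
  proof -
    have "- (real h * real w) / real R = real w * x h" for w unfolding x_def by simp
    thus ?thesis unfolding ccoef_def a_def R_def by simp
  qed
  have sp: "1 / real R \<le> frac (x i - x j) \<and> frac (x i - x j) \<le> 1 - 1 / real R"
    if "i \<in> {..<R}" "j \<in> {..<R}" "i \<noteq> j" for i j
  proof -
    have "x i - x j = real_of_int (int j - int i) / real_of_int (int R)" unfolding x_def
      using Rp by (simp add: field_simps)
    moreover have "\<not> int R dvd (int j - int i)"
    proof
      assume "int R dvd int j - int i"
      moreover have "int j - int i \<noteq> 0" using that by simp
      ultimately have "\<bar>int R\<bar> \<le> \<bar>int j - int i\<bar>" using dvd_imp_le_int by blast
      thus False using that by auto
    qed
    ultimately show ?thesis using R1 by (simp only:) (rule frac_int_div, auto)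
  qed
  have ls: "(\<Sum>h\<in>{..<R}. (norm (\<Sum>w<R. a w * e (real w * x h)))\<^sup>2) \<le> 8 * real R * (\<Sum>w<R. (norm (a w))\<^sup>2)"
    by (rule large_sieve) (use R1 sp in auto)
  have "(\<Sum>h<R. (norm (ccoef q \<alpha> P \<kappa> \<rho> l u h))\<^sup>2) = (\<Sum>h<R. (norm (\<Sum>w<R. a w * e (real w * x h)))\<^sup>2) / (real R)\<^sup>2"
  proof -
    have nz: "(norm ((1 / of_nat R) * z))\<^sup>2 = (norm z)\<^sup>2 / (real R)\<^sup>2" for z :: complex
      by (simp add: norm_mult norm_divide power_divide)
    show ?thesis unfolding cc by (simp only: nz sum_divide_distrib)
  qed
  also have "\<dots> \<le> 8 * real R * real R / (real R)\<^sup>2"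
    using ls na by (intro divide_right_mono) auto
  also have "\<dots> = 8" using Rp by (simp add: power2_eq_square)
  finally show ?thesis unfolding R_def .
qed

lemma abstract_bound:
  fixes c :: "nat \<Rightarrow> nat \<Rightarrow> complex" and Ms :: "int set" and Ks :: "int \<Rightarrow> int set"
    and X \<beta> :: real and N R q :: nat
  assumes N: "N \<ge> 1" and q: "q \<ge> 1" and Xp: "X > 0" and XN: "X\<^sup>2 \<le> real N"
    and csq: "\<And>u. u < N \<Longrightarrow> (\<Sum>h<R. (norm (c h u))\<^sup>2) \<le> 8"
    and finM: "finite Ms" and Ms: "\<And>m. m \<in> Ms \<Longrightarrow> X / real q \<le> real_of_int m \<and> real_of_int m < X"
    and Ks: "\<And>m k. m \<in> Ms \<Longrightarrow> k \<in> Ks m \<Longrightarrow> 0 \<le> k \<and> k < m \<and> gcd k m = 1"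
  shows "(\<Sum>h<R. \<Sum>m\<in>Ms. (1 / real_of_int m) * (\<Sum>k\<in>Ks m.
            cmod (\<Sum>u<N. c h u * e (real u * (\<beta> + real_of_int k / real_of_int m)))))
         \<le> 16 * real q * sqrt (real R) * real N"
proof -
  define F where "F h p = cmod (\<Sum>u<N. c h u * e (real u * (\<beta> + real_of_int (snd p) / real_of_int (fst p))))" for h p
  define Ps where "Ps = Sigma Ms Ks"
  have qp: "0 < real q" using q by simp
  have mpos: "0 < m" if "m \<in> Ms" for m
  proof -
    have "0 < X / real q" using Xp qp by simp
    thus ?thesis using Ms[OF that] by linarith
  qed
  have finK: "finite (Ks m)" if "m \<in> Ms" for m
    by (rule finite_subset[of _ "{0..<m}"]) (use Ks[OF that] in auto)
  have finP: "finite Ps" unfolding Ps_def using finM finK by auto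
  have F0: "0 \<le> F h p" for h p unfolding F_def by simp
  have "(\<Sum>h<R. \<Sum>m\<in>Ms. (1 / real_of_int m) * (\<Sum>k\<in>Ks m.
            cmod (\<Sum>u<N. c h u * e (real u * (\<beta> + real_of_int k / real_of_int m)))))
      = (\<Sum>h<R. \<Sum>m\<in>Ms. \<Sum>k\<in>Ks m. (1 / real_of_int m) * F h (m, k))"
    unfolding F_def by (simp add: sum_distrib_left)
  also have "\<dots> \<le> (\<Sum>h<R. \<Sum>m\<in>Ms. \<Sum>k\<in>Ks m. (real q / X) * F h (m, k))"
  proof (intro sum_mono mult_right_mono F0)
    fix m assume m: "m \<in> Ms"
    have a1: "X / real q \<le> real_of_int m" using Ms[OF m] by simp
    have a2: "0 < X / real q" using Xp qp by simp
    have a3: "0 < real_of_int m" using a1 a2 by linarith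
    have a4: "0 < real_of_int m * (X / real q)" using a2 a3 by (rule mult_pos_pos[rotated])
    have "1 / real_of_int m \<le> 1 / (X / real q)"
      by (rule divide_left_mono[OF a1 _ a4]) simp
    thus "1 / real_of_int m \<le> real q / X" by simp
  qed
  also have "\<dots> = (real q / X) * (\<Sum>h<R. \<Sum>p\<in>Ps. F h p)"
  proof -
    have finK': "\<forall>m\<in>Ms. finite (Ks m)" using finK by auto
    have sig: "(\<Sum>m\<in>Ms. \<Sum>k\<in>Ks m. G (m, k)) = (\<Sum>p\<in>Ps. G p)" for G :: "int \<times> int \<Rightarrow> real"
      unfolding Ps_def using sum.Sigma[OF finM finK', of "\<lambda>m k. G (m, k)"] by simp
    have "(\<Sum>m\<in>Ms. \<Sum>k\<in>Ks m. real q / X * F h (m, k)) = (\<Sum>p\<in>Ps. real q / X * F h p)" for h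
      using sig[of "\<lambda>p. real q / X * F h p"] by simp
    hence "(\<Sum>h<R. \<Sum>m\<in>Ms. \<Sum>k\<in>Ks m. real q / X * F h (m, k)) = (\<Sum>h<R. \<Sum>p\<in>Ps. real q / X * F h p)"
      by simp
    thus ?thesis by (simp only: sum_distrib_left)
  qed
  finally have step2: "(\<Sum>h<R. \<Sum>m\<in>Ms. (1 / real_of_int m) * (\<Sum>k\<in>Ks m.
            cmod (\<Sum>u<N. c h u * e (real u * (\<beta> + real_of_int k / real_of_int m)))))
      \<le> (real q / X) * (\<Sum>h<R. \<Sum>p\<in>Ps. F h p)" .
  have step3: "(\<Sum>h<R. \<Sum>p\<in>Ps. F h p)\<^sup>2 \<le> (real R * real (card Ps)) * (\<Sum>h<R. \<Sum>p\<in>Ps. (F h p)\<^sup>2)"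
  proof -
    have "(\<Sum>h<R. \<Sum>p\<in>Ps. F h p) = (\<Sum>z\<in>{..<R} \<times> Ps. 1 * F (fst z) (snd z))"
      by (simp add: sum.cartesian_product split_def)
    moreover have "(\<Sum>h<R. \<Sum>p\<in>Ps. (F h p)\<^sup>2) = (\<Sum>z\<in>{..<R} \<times> Ps. (F (fst z) (snd z))\<^sup>2)"
      by (simp add: sum.cartesian_product split_def)
    moreover have "(\<Sum>z\<in>{..<R} \<times> Ps. (1::real)\<^sup>2) = real R * real (card Ps)"
      by (simp add: card_cartesian_product)
    moreover have "(\<Sum>z\<in>{..<R} \<times> Ps. 1 * F (fst z) (snd z))\<^sup>2
       \<le> (\<Sum>z\<in>{..<R} \<times> Ps. (1::real)\<^sup>2) * (\<Sum>z\<in>{..<R} \<times> Ps. (F (fst z) (snd z))\<^sup>2)"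
      by (rule Cauchy_Schwarz_ineq_sum)
    ultimately show ?thesis by simp
  qed
  have step4: "(\<Sum>h<R. \<Sum>p\<in>Ps. (F h p)\<^sup>2) \<le> 64 * (real N)\<^sup>2"
  proof -
    define x where "x p = \<beta> + real_of_int (snd p) / real_of_int (fst p)" for p :: "int \<times> int"
    have sp: "1 / real N \<le> frac (x i - x j) \<and> frac (x i - x j) \<le> 1 - 1 / real N"
      if ijP: "i \<in> Ps" "j \<in> Ps" "i \<noteq> j" for i j
    proof -
      obtain m1 k1 where i: "i = (m1, k1)" "m1 \<in> Ms" "k1 \<in> Ks m1" using ijP(1) unfolding Ps_def by auto
      obtain m2 k2 where j: "j = (m2, k2)" "m2 \<in> Ms" "k2 \<in> Ks m2" using ijP(2) unfolding Ps_def by auto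
      have m1p: "0 < m1" and m2p: "0 < m2" using mpos i j by auto
      have "real_of_int m1 * real_of_int m2 < X * X"
        using Ms[OF i(2)] Ms[OF j(2)] m1p m2p by (intro mult_strict_mono) auto
      hence "real_of_int (m1 * m2) < real N" using XN by (simp add: power2_eq_square)
      hence mm: "m1 * m2 \<le> int N" by linarith
      show ?thesis unfolding x_def i j fst_conv snd_conv
        by (rule farey_spacing[OF m1p m2p mm]) (use Ks[OF i(2,3)] Ks[OF j(2,3)] ijP i j in auto)
    qed
    have "(\<Sum>p\<in>Ps. (F h p)\<^sup>2) \<le> 8 * real N * (\<Sum>u<N. (norm (c h u))\<^sup>2)" for h
      unfolding F_def using large_sieve[OF finP N sp, where c = "c h"] unfolding x_def by simp
    hence "(\<Sum>h<R. \<Sum>p\<in>Ps. (F h p)\<^sup>2) \<le> (\<Sum>h<R. 8 * real N * (\<Sum>u<N. (norm (c h u))\<^sup>2))"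
      by (intro sum_mono)
    also have "\<dots> = 8 * real N * (\<Sum>u<N. \<Sum>h<R. (norm (c h u))\<^sup>2)"
      by (simp add: sum_distrib_left sum.swap[of _ "{..<R}"])
    also have "\<dots> \<le> 8 * real N * (\<Sum>u<N. 8)"
      by (intro mult_left_mono sum_mono csq) auto
    also have "\<dots> = 64 * (real N)\<^sup>2" by (simp add: power2_eq_square)
    finally show ?thesis .
  qed
  have step5: "real (card Ps) \<le> 4 * X\<^sup>2"
  proof (cases "X < 1")
    case True
    have "Ms = {}"
    proof (rule ccontr)
      assume "Ms \<noteq> {}"
      then obtain m where m: "m \<in> Ms" by auto
      have "0 < m" by (rule mpos[OF m])
      thus False using Ms[OF m] True by linarith
    qed
    thus ?thesis unfolding Ps_def by simp
  next
    case False
    define n where "n = nat \<lceil>X\<rceil>"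
    have "Ps \<subseteq> {0..<int n} \<times> {0..<int n}"
    proof
      fix p assume "p \<in> Ps"
      then obtain m k where p: "p = (m, k)" "m \<in> Ms" "k \<in> Ks m" unfolding Ps_def by auto
      have "real_of_int m < X" using Ms[OF p(2)] by simp
      hence "m < int n" unfolding n_def using Xp by linarith
      thus "p \<in> {0..<int n} \<times> {0..<int n}" using p Ks[OF p(2,3)] mpos[OF p(2)] by auto
    qed
    hence "card Ps \<le> card ({0..<int n} \<times> {0..<int n})" by (rule card_mono[rotated]) auto
    hence "card Ps \<le> n * n" by (simp add: card_cartesian_product)
    hence "real (card Ps) \<le> real n * real n" by (metis of_nat_le_iff of_nat_mult)
    also have "\<dots> \<le> (X + 1) * (X + 1)"
    proof -
      have "real n \<le> X + 1" unfolding n_def using Xp by linarith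
      thus ?thesis by (intro mult_mono) auto
    qed
    also have "\<dots> \<le> (2 * X) * (2 * X)"
    proof -
      have "X + 1 \<le> 2 * X" using False by linarith
      thus ?thesis using Xp by (intro mult_mono) auto
    qed
    also have "\<dots> = 4 * X\<^sup>2" by (simp add: power2_eq_square)
    finally show ?thesis .
  qed
  have "(\<Sum>h<R. \<Sum>p\<in>Ps. F h p)\<^sup>2 \<le> (real R * (4 * X\<^sup>2)) * (64 * (real N)\<^sup>2)"
  proof -
    have "(real R * real (card Ps)) * (\<Sum>h<R. \<Sum>p\<in>Ps. (F h p)\<^sup>2) \<le> (real R * (4 * X\<^sup>2)) * (64 * (real N)\<^sup>2)"
      using step4 step5 by (intro mult_mono) (auto intro!: sum_nonneg)
    thus ?thesis using step3 by linarith
  qed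
  also have "\<dots> = (16 * X * sqrt (real R) * real N)\<^sup>2"
    by (simp add: power_mult_distrib)
  finally have S2: "(\<Sum>h<R. \<Sum>p\<in>Ps. F h p)\<^sup>2 \<le> (16 * X * sqrt (real R) * real N)\<^sup>2" .
  from S2 have S: "(\<Sum>h<R. \<Sum>p\<in>Ps. F h p) \<le> 16 * X * sqrt (real R) * real N"
  proof (rule power2_le_imp_le)
    show "0 \<le> 16 * X * sqrt (real R) * real N" using Xp by simp
  qed
  have "(real q / X) * (\<Sum>h<R. \<Sum>p\<in>Ps. F h p) \<le> (real q / X) * (16 * X * sqrt (real R) * real N)"
  proof (rule mult_left_mono[OF S])
    show "0 \<le> real q / X" using Xp qp by simp
  qed
  also have "\<dots> = 16 * real q * sqrt (real R) * real N * (X / X)" by (simp add: mult_ac)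
  also have "\<dots> = 16 * real q * sqrt (real R) * real N" using Xp by simp
  finally show ?thesis using step2 by linarith
qed

lemma main_bound:
  fixes q :: nat and P :: "nat \<Rightarrow> nat" and \<alpha> \<theta> :: real and \<mu> \<nu> d M :: int and \<kappa> \<rho>1 l :: nat
  assumes q: "q \<ge> 2" and d1: "d \<ge> 1"
    and Mlow: "real q powr real_of_int (\<mu> - 1) \<le> real_of_int M"
    and kap: "(real_of_int M)\<^sup>2 / (real_of_int d)\<^sup>2 \<le> real q ^ \<kappa>"
  shows "\<bar>\<Sum>h<q ^ \<rho>1.
       \<Sum>m'\<in>{m'::int. real_of_int M / (real q * real_of_int d) \<le> real_of_int m' \<and>
                       real_of_int m' < real_of_int M / real_of_int d}.
         (1 / real_of_int m') *
         (\<Sum>k'\<in>{k'::int. 0 \<le> k' \<and> k' < m' \<and> gcd k' m' = 1}.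
            cmod (\<Sum>u<q ^ \<kappa>. ccoef q \<alpha> P \<kappa> \<rho>1 l u h *
                    e (- (real u * \<theta>) / real q powr real_of_int (\<mu> + \<nu>)
                       + real_of_int k' * real u / real_of_int m')))\<bar>
    \<le> (16 * real q / ln (real q)) * ln (real q) * real q powr (real \<rho>1 / 2 + real \<kappa>)"
proof -
  define N where "N = q ^ \<kappa>"
  define R where "R = q ^ \<rho>1"
  define X where "X = real_of_int M / real_of_int d"
  define \<beta> where "\<beta> = - \<theta> / real q powr real_of_int (\<mu> + \<nu>)"
  define Ms where "Ms = {m'::int. real_of_int M / (real q * real_of_int d) \<le> real_of_int m' \<and>
                       real_of_int m' < real_of_int M / real_of_int d}"
  define Ks where "Ks m' = {k'::int. 0 \<le> k' \<and> k' < m' \<and> gcd k' m' = 1}" for m'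
  define c where "c h u = ccoef q \<alpha> P \<kappa> \<rho>1 l u h" for h u
  have qp: "0 < real q" using q by simp
  have Mp: "0 < real_of_int M" using Mlow qp by (smt (verit) powr_gt_zero)
  have dp: "0 < real_of_int d" using d1 by simp
  have Xp: "0 < X" unfolding X_def using Mp dp by simp
  have N1: "N \<ge> 1" unfolding N_def using q by simp
  have XN: "X\<^sup>2 \<le> real N" unfolding X_def N_def using kap by (simp add: power_divide)
  have Msc: "X / real q \<le> real_of_int m \<and> real_of_int m < X" if "m \<in> Ms" for m
  proof -
    have "real_of_int M / (real q * real_of_int d) = X / real q" unfolding X_def by simp
    thus ?thesis using that unfolding Ms_def X_def by (auto simp: mult.commute)
  qed
  have finM: "finite Ms"
  proof (rule finite_subset[of _ "{0..\<lceil>X\<rceil>}"])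
    show "Ms \<subseteq> {0..\<lceil>X\<rceil>}"
    proof
      fix m assume m: "m \<in> Ms"
      have "0 < X / real q" using Xp qp by simp
      hence "0 \<le> m" using Msc[OF m] by linarith
      moreover have "m \<le> \<lceil>X\<rceil>" using Msc[OF m] by linarith
      ultimately show "m \<in> {0..\<lceil>X\<rceil>}" by simp
    qed
  qed simp
  have csq: "(\<Sum>h<R. (norm (c h u))\<^sup>2) \<le> 8" if "u < N" for u
    unfolding c_def R_def by (rule ccoef_sq[OF q])
  have ab: "(\<Sum>h<R. \<Sum>m\<in>Ms. (1 / real_of_int m) * (\<Sum>k\<in>Ks m.
            cmod (\<Sum>u<N. c h u * e (real u * (\<beta> + real_of_int k / real_of_int m)))))
         \<le> 16 * real q * sqrt (real R) * real N"
    by (rule abstract_bound[OF N1 _ Xp XN csq finM Msc]) (use q in \<open>auto simp: Ks_def\<close>)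
  have arg: "- (real u * \<theta>) / real q powr real_of_int (\<mu> + \<nu>) + real_of_int k * real u / real_of_int m
      = real u * (\<beta> + real_of_int k / real_of_int m)" for u k m
    unfolding \<beta>_def by (simp add: algebra_simps)
  define L where "L = (\<Sum>h<R. \<Sum>m\<in>Ms. (1 / real_of_int m) * (\<Sum>k\<in>Ks m.
            cmod (\<Sum>u<N. c h u * e (real u * (\<beta> + real_of_int k / real_of_int m)))))"
  have Leq: "(\<Sum>h<q ^ \<rho>1.
       \<Sum>m'\<in>{m'::int. real_of_int M / (real q * real_of_int d) \<le> real_of_int m' \<and>
                       real_of_int m' < real_of_int M / real_of_int d}.
         (1 / real_of_int m') *
         (\<Sum>k'\<in>{k'::int. 0 \<le> k' \<and> k' < m' \<and> gcd k' m' = 1}.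
            cmod (\<Sum>u<q ^ \<kappa>. ccoef q \<alpha> P \<kappa> \<rho>1 l u h *
                    e (- (real u * \<theta>) / real q powr real_of_int (\<mu> + \<nu>)
                       + real_of_int k' * real u / real_of_int m')))) = L"
    unfolding L_def R_def N_def Ms_def Ks_def c_def arg by simp
  have L0: "0 \<le> L" unfolding L_def
  proof (intro sum_nonneg mult_nonneg_nonneg)
    fix m assume "m \<in> Ms"
    hence "0 < real_of_int m" using Msc Xp qp by (smt (verit) divide_pos_pos)
    thus "0 \<le> 1 / real_of_int m" by simp
  qed auto
  have "real q powr (real \<rho>1 / 2 + real \<kappa>) = sqrt (real R) * real N"
  proof -
    have "real q powr (real \<rho>1 / 2 + real \<kappa>) = real q powr (real \<rho>1 / 2) * real q powr real \<kappa>"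
      by (rule powr_add)
    also have "real q powr (real \<rho>1 / 2) = sqrt (real q powr real \<rho>1)"
      by (rule powr_half_sqrt_powr) simp
    also have "real q powr real \<rho>1 = real R" unfolding R_def using qp by (simp add: powr_realpow)
    also have "real q powr real \<kappa> = real N" unfolding N_def using qp by (simp add: powr_realpow)
    finally show ?thesis .
  qed
  moreover have "ln (real q) > 0" using q by simp
  ultimately have rhs: "(16 * real q / ln (real q)) * ln (real q) * real q powr (real \<rho>1 / 2 + real \<kappa>)
      = 16 * real q * sqrt (real R) * real N" by simp
  show ?thesis unfolding Leq rhs using L0 ab L_def by simp
qed


theorem mainTheorem2:
  fixes q :: nat
  assumes "q \<ge> 2"
  shows "\<exists>C::real. \<forall>(P::nat \<Rightarrow> nat) (\<alpha>::real) (\<mu>::int) (\<nu>::int) (d::int) (M::int)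
            (\<kappa>::nat) (\<rho>1::nat) (\<theta>::real) (l::nat).
    mono P \<and> d \<ge> 1 \<and>
    real q powr real_of_int (\<mu> - 1) \<le> real_of_int M \<and> real_of_int M < real q powr real_of_int \<mu> \<and>
    1 \<le> \<kappa> \<and> real \<kappa> \<le> 2 / 3 * real_of_int (\<mu> + \<nu>) \<and>
    real q powr (real \<kappa> - 1) < (real_of_int M)\<^sup>2 / (real_of_int d)\<^sup>2 \<and>
    (real_of_int M)\<^sup>2 / (real_of_int d)\<^sup>2 \<le> real q ^ \<kappa> \<and>
    int \<rho>1 \<le> \<mu> + \<nu> - int \<kappa>
    \<longrightarrow>
    \<bar>\<Sum>h<q ^ \<rho>1.
       \<Sum>m'\<in>{m'::int. real_of_int M / (real q * real_of_int d) \<le> real_of_int m' \<and>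
                       real_of_int m' < real_of_int M / real_of_int d}.
         (1 / real_of_int m') *
         (\<Sum>k'\<in>{k'::int. 0 \<le> k' \<and> k' < m' \<and> gcd k' m' = 1}.
            cmod (\<Sum>u<q ^ \<kappa>. ccoef q \<alpha> P \<kappa> \<rho>1 l u h *
                    e (- (real u * \<theta>) / real q powr real_of_int (\<mu> + \<nu>)
                       + real_of_int k' * real u / real_of_int m')))\<bar>
    \<le> C * ln (real q) * real q powr (real \<rho>1 / 2 + real \<kappa>)"
  by (intro exI[of _ "16 * real q / ln (real q)"] allI impI, elim conjE)
     (rule main_bound[OF assms], assumption+)

end
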